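(* Let $CK(z)=\sum_{n\ge1}|CK_n|z^n$. Then, as formal power series, $$CK(z)=2z^2+\sum_{m\ge1}m!\,z^{m-1}\left(\frac{1-z}{1+z}\right)^{m-1}\frac{z(1-2z-z^2)}{(1+z)^2}.$$
   Context: $CK_n=\{\sigma\in S_n: |\sigma_i-\sigma_{i+1}|>1 \text{ for } 1\le i\le n-1, \text{ and } |\sigma_1-\sigma_n|>1\}$, the set of cylindrical king permutations (one-line notation); $CK_1=S_1$. *)

theory Defs
  imports "HOL-Computational_Algebra.Formal_Power_Series" "HOL-Combinatorics.Permutations"
begin

text \<open>Cylindrical king permutations of [n], as bijections of {1..n} (one-line notation
  sigma_i = sigma i).  By convention CK_1 = S_1.\<close>
definition CK :: "nat \<Rightarrow> (nat \<Rightarrow> nat) set" where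
  "CK n = {\<sigma>. \<sigma> permutes {1..n} \<and>
     (n = 1 \<or>
      ((\<forall>i\<in>{1..<n}. \<bar>int (\<sigma> i) - int (\<sigma> (Suc i))\<bar> > 1) \<and>
       \<bar>int (\<sigma> 1) - int (\<sigma> n)\<bar> > 1))}"

definition CK_gf :: "real fps" where
  "CK_gf = Abs_fps (\<lambda>n. if n = 0 then 0 else of_nat (card (CK n)))"

end

theory Submission
  imports Defs
begin

unbundle fps_syntax



definition vv :: "real fps" where "vv = inverse (1 + fps_X)"
definition ww :: "real fps" where "ww = fps_X * ((1 - fps_X) * vv)"

lemma vv_nth: "vv $ n = (-1) ^ n"
  by (simp add: vv_def fps_inverse_fps_X_plus1)

lemma vv_mult: "(1 + fps_X) * vv = 1"
  unfolding vv_def by (rule inverse_mult_eq_1') simp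

lemma deriv_vv: "fps_deriv vv = - (vv ^ 2)"
proof -
  have "fps_deriv ((1 + fps_X) * vv) = 0" by (simp add: vv_mult)
  hence "vv + (1 + fps_X) * fps_deriv vv = 0" by (simp add: algebra_simps)
  hence "vv * vv + vv * (1 + fps_X) * fps_deriv vv = 0"
    by (metis (no_types, lifting) mult.assoc distrib_left mult_zero_right)
  hence "vv * vv + fps_deriv vv = 0" using vv_mult by (simp add: mult.commute)
  thus ?thesis by (simp add: power2_eq_square eq_neg_iff_add_eq_0 add.commute)
qed

lemma u_nth: "((1 - fps_X) * vv) $ i = (if i = 0 then 1 else 2 * (-1) ^ i)"
  by (cases i) (auto simp: algebra_simps vv_nth)

lemma ww_nth: "ww $ c = (if c = 0 then 0 else if c = 1 then 1 else 2 * (-1) ^ (c - 1))"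
  by (cases c) (auto simp: ww_def u_nth)

lemma ww_pow_nth_small: "n < k \<Longrightarrow> (ww ^ k) $ n = 0"
  by (simp add: ww_def power_mult_distrib fps_X_power_mult_nth)

lemma deriv_ww: "fps_deriv ww = (1 - 2 * fps_X - fps_X ^ 2) * vv ^ 2"
proof -
  have a: "(1 - 2 * fps_X) * vv = (1 - 2 * fps_X) * ((1 + fps_X) * vv) * vv"
    by (simp add: vv_mult)
  have "fps_deriv ww = (1 - 2 * fps_X) * vv - fps_X * (1 - fps_X) * vv ^ 2"
    by (simp add: ww_def deriv_vv algebra_simps power2_eq_square)
  also have "\<dots> = (1 - 2 * fps_X) * ((1 + fps_X) * vv) * vv - fps_X * (1 - fps_X) * vv ^ 2"
    using a by simp
  also have "\<dots> = (1 - 2 * fps_X - fps_X ^ 2) * vv ^ 2"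
    by (simp add: algebra_simps power2_eq_square)
  finally show ?thesis .
qed

lemma T_eq:
  "fps_const (fact (Suc m)) * fps_X ^ m * ((1 - fps_X) / (1 + fps_X)) ^ m *
           (fps_X * (1 - 2 * fps_X - fps_X ^ 2) / (1 + fps_X) ^ 2)
   = fps_const (fact m) * fps_X * fps_deriv (ww ^ Suc m)"
proof -
  have d1: "(1 - fps_X) / (1 + fps_X) = (1 - fps_X) * (vv :: real fps)"
    unfolding vv_def by (rule fps_divide_unit) simp
  have d2: "fps_X * (1 - 2 * fps_X - fps_X ^ 2) / (1 + fps_X) ^ 2 = fps_X * (1 - 2 * fps_X - fps_X ^ 2) * (vv :: real fps) ^ 2"
    unfolding vv_def by (subst fps_divide_unit) (simp_all add: fps_inverse_power)
  have "fps_deriv (ww ^ Suc m) = fps_const (of_nat (Suc m)) * ((1 - 2 * fps_X - fps_X ^ 2) * vv ^ 2) * ww ^ m"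
    using fps_deriv_power[of ww "Suc m"] by (simp add: deriv_ww del: power_Suc)
  moreover have "fps_const (fact (Suc m)) = fps_const (of_nat (Suc m) :: real) * fps_const (fact m)"
    by (simp only: fact_Suc fps_const_mult)
  ultimately show ?thesis
    unfolding d1 d2 ww_def power_mult_distrib by (simp add: mult_ac)
qed

lemma X_deriv_nth:
  "(fps_const (c::real) * fps_X * fps_deriv f) $ n = c * of_nat n * f $ n"
  by (cases n) (simp_all add: mult.assoc)

lemma T_nth:
  "(fps_const (fact m) * fps_X * fps_deriv (ww ^ Suc m)) $ n = fact m * of_nat n * (ww ^ Suc m) $ n"
  by (rule X_deriv_nth)


definition bad :: "nat \<Rightarrow> nat \<Rightarrow> bool" where "bad a b \<longleftrightarrow> a = Suc b \<or> b = Suc a"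

definition validp :: "nat list \<Rightarrow> bool" where "validp p \<longleftrightarrow> p \<noteq> [] \<and> successively bad p"

definition splits :: "nat list \<Rightarrow> nat list list set" where
  "splits xs = {ps. concat ps = xs \<and> (\<forall>p\<in>set ps. validp p)}"

lemma length_le_concat: "\<forall>p\<in>set ps. p \<noteq> [] \<Longrightarrow> length ps \<le> length (concat ps)"
proof (induction ps)
  case (Cons a ps)
  hence "length a \<ge> 1" "length ps \<le> length (concat ps)" by (auto simp: Suc_le_eq)
  thus ?case by simp
qed simp

lemma finite_splits: "finite (splits xs)"
proof -
  let ?A = "{p. set p \<subseteq> set xs \<and> length p \<le> length xs}"
  have "splits xs \<subseteq> {ps. set ps \<subseteq> ?A \<and> length ps \<le> length xs}"
  proof
    fix ps assume "ps \<in> splits xs"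
    hence c: "concat ps = xs" and v: "\<forall>p\<in>set ps. validp p" by (auto simp: splits_def)
    have "length ps \<le> length xs" using length_le_concat[of ps] v c by (auto simp: validp_def)
    moreover have "set ps \<subseteq> ?A"
    proof
      fix p assume "p \<in> set ps"
      then obtain us vs where "ps = us @ p # vs" by (meson split_list)
      with c have "xs = concat us @ p @ concat vs" by simp
      thus "p \<in> ?A" by auto
    qed
    ultimately show "ps \<in> {ps. set ps \<subseteq> ?A \<and> length ps \<le> length xs}" by simp
  qed
  moreover have "finite {ps. set ps \<subseteq> ?A \<and> length ps \<le> length xs}"
    by (intro finite_lists_length_le finite_lists_length_le) simp
  ultimately show ?thesis by (rule finite_subset)
qed

lemma splits_Nil: "splits [] = {[]}"
  by (auto simp: splits_def validp_def)

lemma splits_single: "splits [x] = {[[x]]}"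
proof -
  have "ps = [[x]]" if "concat ps = [x]" "\<forall>p\<in>set ps. p \<noteq> []" for ps
    using that
  proof (cases ps)
    case (Cons p ps')
    with that have "p = [x] \<and> concat ps' = []"
      by (cases p) auto
    with that Cons show ?thesis by (cases ps') auto
  qed auto
  thus ?thesis by (auto simp: splits_def validp_def)
qed

lemma splits_Cons:
  assumes "xs \<noteq> []"
  shows "splits (x # xs) = (\<lambda>ps. [x] # ps) ` splits xs \<union>
     (if bad x (hd xs) then (\<lambda>ps. (x # hd ps) # tl ps) ` splits xs else {})"
proof (intro equalityI subsetI)
  fix ps assume ps: "ps \<in> splits (x # xs)"
  hence c: "concat ps = x # xs" and v: "\<forall>p\<in>set ps. validp p" by (auto simp: splits_def)
  obtain p ps' where pps: "ps = p # ps'" using c by (cases ps) auto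
  have "p \<noteq> []" using v pps by (auto simp: validp_def)
  then obtain p' where pp: "p = x # p'" and c2: "p' @ concat ps' = xs" using c pps by (cases p) auto
  show "ps \<in> (\<lambda>ps. [x] # ps) ` splits xs \<union>
     (if bad x (hd xs) then (\<lambda>ps. (x # hd ps) # tl ps) ` splits xs else {})"
  proof (cases "p' = []")
    case True
    hence "ps' \<in> splits xs" using c2 v pps by (auto simp: splits_def)
    thus ?thesis using pps pp True by auto
  next
    case False
    have sb: "successively bad (x # p')" using v pps pp by (auto simp: validp_def)
    hence "bad x (hd p')" "successively bad p'" using False by (auto simp: successively_Cons)
    moreover have "hd xs = hd p'" using c2 False by (cases p') auto
    ultimately have "bad x (hd xs)" "p' # ps' \<in> splits xs"
      using c2 v pps False by (auto simp: splits_def validp_def)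
    thus ?thesis using pps pp by (auto intro!: image_eqI[of _ _ "p' # ps'"])
  qed
next
  fix ps assume ps: "ps \<in> (\<lambda>ps. [x] # ps) ` splits xs \<union>
     (if bad x (hd xs) then (\<lambda>ps. (x # hd ps) # tl ps) ` splits xs else {})"
  show "ps \<in> splits (x # xs)"
  proof (cases "ps \<in> (\<lambda>ps. [x] # ps) ` splits xs")
    case True thus ?thesis by (auto simp: splits_def validp_def)
  next
    case False
    with ps obtain qs where b: "bad x (hd xs)" and qs: "qs \<in> splits xs" and pq: "ps = (x # hd qs) # tl qs"
      by (auto split: if_splits)
    have c: "concat qs = xs" and v: "\<forall>p\<in>set qs. validp p" using qs by (auto simp: splits_def)
    obtain q qs' where qq: "qs = q # qs'" using c assms by (cases qs) auto
    have "q \<noteq> []" "successively bad q" using v qq by (auto simp: validp_def)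
    moreover have "hd q = hd xs" using c qq \<open>q \<noteq> []\<close> by (cases q) auto
    ultimately have "successively bad (x # q)" using b by (simp add: successively_Cons)
    thus ?thesis using pq qq c v by (auto simp: splits_def validp_def)
  qed
qed

lemma ne_splits: "xs \<noteq> [] \<Longrightarrow> ps \<in> splits xs \<Longrightarrow> ps \<noteq> [] \<and> hd ps \<noteq> []"
  by (cases ps) (auto simp: splits_def validp_def)

lemma sign_pred: "m \<noteq> 0 \<Longrightarrow> ((-1::int) ^ (a + (m - Suc 0))) = - ((-1) ^ (a + m))"
  by (cases m) auto

lemma sum_splits_Cons:
  assumes "xs \<noteq> []"
  shows "(\<Sum>ps\<in>splits (x # xs). f ps) = (\<Sum>ps\<in>splits xs. f ([x] # ps)) +
     (if bad x (hd xs) then (\<Sum>ps\<in>splits xs. f ((x # hd ps) # tl ps)) else 0)"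
proof -
  have ne: "ps \<noteq> [] \<and> hd ps \<noteq> []" if "ps \<in> splits xs" for ps
    using that assms by (cases ps) (auto simp: splits_def validp_def)
  have inj1: "inj_on (\<lambda>ps. [x] # ps) (splits xs)" by (auto simp: inj_on_def)
  have inj2: "inj_on (\<lambda>ps. (x # hd ps) # tl ps) (splits xs)"
  proof (rule inj_onI)
    fix ps qs assume "ps \<in> splits xs" "qs \<in> splits xs" "(x # hd ps) # tl ps = (x # hd qs) # tl qs"
    with ne[of ps] ne[of qs] show "ps = qs" by (cases ps; cases qs) auto
  qed
  have disj: "(\<lambda>ps. [x] # ps) ` splits xs \<inter> (\<lambda>ps. (x # hd ps) # tl ps) ` splits xs = {}"
    using ne by fastforce
  show ?thesis
  proof (cases "bad x (hd xs)")
    case True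
    have "(\<Sum>ps\<in>splits (x # xs). f ps) = (\<Sum>ps\<in>(\<lambda>ps. [x] # ps) ` splits xs. f ps) +
        (\<Sum>ps\<in>(\<lambda>ps. (x # hd ps) # tl ps) ` splits xs. f ps)"
      unfolding splits_Cons[OF assms] using True disj finite_splits
      by (simp add: sum.union_disjoint)
    also have "\<dots> = (\<Sum>ps\<in>splits xs. f ([x] # ps)) + (\<Sum>ps\<in>splits xs. f ((x # hd ps) # tl ps))"
      by (simp add: sum.reindex[OF inj1] sum.reindex[OF inj2])
    finally show ?thesis using True by simp
  next
    case False
    thus ?thesis unfolding splits_Cons[OF assms] by (simp add: sum.reindex[OF inj1])
  qed
qed

definition W :: "nat list \<Rightarrow> int" where
  "W ys = (\<Sum>ps\<in>splits ys. (-1) ^ (length ys + length ps))"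

definition Wj :: "nat \<Rightarrow> nat list \<Rightarrow> int" where
  "Wj j ys = (\<Sum>ps\<in>splits ys. if j < length (hd ps) then (-1) ^ (length ys + length ps) else 0)"

lemma W_eq: "W ys = (if successively (\<lambda>a b. \<not> bad a b) ys then 1 else 0)"
proof (induction ys)
  case Nil thus ?case by (simp add: W_def splits_Nil)
next
  case (Cons x xs)
  show ?case
  proof (cases "xs = []")
    case True thus ?thesis by (simp add: W_def splits_single)
  next
    case False
    have "W (x # xs) = (\<Sum>ps\<in>splits xs. (-1) ^ (length xs + length ps)) +
       (if bad x (hd xs) then (\<Sum>ps\<in>splits xs. - ((-1) ^ (length xs + length ps))) else 0)"
      unfolding W_def
      by (subst sum_splits_Cons[OF False], simp, intro impI sum.cong refl)
         (use ne_splits[OF False] in \<open>auto simp: sign_pred\<close>)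
    also have "\<dots> = W xs - (if bad x (hd xs) then W xs else 0)"
      by (simp add: W_def sum_negf)
    finally show ?thesis using Cons.IH False by (simp add: successively_Cons)
  qed
qed

lemma Wj_eq:
  assumes "j < length ys"
  shows "Wj j ys = (if successively bad (take (Suc j) ys) then (-1) ^ j * W (drop j ys) else 0)"
  using assms
proof (induction j arbitrary: ys)
  case 0
  have "hd ps \<noteq> []" if "ps \<in> splits ys" for ps
    using that 0 by (cases ps) (auto simp: splits_def validp_def)
  hence "Wj 0 ys = W ys" unfolding Wj_def W_def by (intro sum.cong) auto
  moreover obtain y ys' where "ys = y # ys'" using 0 by (cases ys) auto
  ultimately show ?case by simp
next
  case (Suc j)
  obtain x xs where ys: "ys = x # xs" using Suc.prems by (cases ys) auto
  have ne: "xs \<noteq> []" "j < length xs" using Suc.prems ys by auto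
  have "Wj (Suc j) ys = (if bad x (hd xs) then (\<Sum>ps\<in>splits xs.
       if j < length (hd ps) then - ((-1) ^ (length xs + length ps)) else 0) else 0)"
    unfolding Wj_def ys
    by (subst sum_splits_Cons[OF ne(1)], simp, intro impI sum.cong refl)
       (use ne_splits[OF ne(1)] in \<open>auto simp: Suc_diff_Suc\<close>)
  also have "\<dots> = (if bad x (hd xs) then - Wj j xs else 0)"
    by (simp add: Wj_def sum_negf[symmetric] if_distrib cong: if_cong)
  also have "\<dots> = (if successively bad (take (Suc (Suc j)) ys) then (-1) ^ Suc j * W (drop (Suc j) ys) else 0)"
    using Suc.IH[OF ne(2)] ne ys by (cases xs) (auto simp: successively_Cons)
  finally show ?case .
qed


lemma alt_ident:
  fixes B :: "nat \<Rightarrow> bool"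
  shows "(\<Sum>t<n. (-1::int) ^ (n - Suc t) *
            (if (\<forall>s. Suc t \<le> s \<and> s < n \<longrightarrow> B s) \<and> (\<forall>i<t. \<not> B i) then 1 else 0))
         = (if \<forall>i<n. \<not> B i then 1 else 0) - (-1) ^ n * (if \<forall>i<n. B i then 1 else 0)"
proof (induction n)
  case 0 thus ?case by simp
next
  case (Suc n)
  let ?S = "\<lambda>n. (\<Sum>t<n. (-1::int) ^ (n - Suc t) *
            (if (\<forall>s. Suc t \<le> s \<and> s < n \<longrightarrow> B s) \<and> (\<forall>i<t. \<not> B i) then 1 else 0))"
  have "(\<Sum>t<n. (-1::int) ^ (Suc n - Suc t) *
            (if (\<forall>s. Suc t \<le> s \<and> s < Suc n \<longrightarrow> B s) \<and> (\<forall>i<t. \<not> B i) then 1 else 0))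
        = (\<Sum>t<n. - (if B n then (-1::int) ^ (n - Suc t) *
            (if (\<forall>s. Suc t \<le> s \<and> s < n \<longrightarrow> B s) \<and> (\<forall>i<t. \<not> B i) then 1 else 0) else 0))"
  proof (rule sum.cong[OF refl])
    fix t assume "t \<in> {..<n}"
    hence t: "t < n" by simp
    have e: "Suc n - Suc t = Suc (n - Suc t)" using t by simp
    have "(\<forall>s. Suc t \<le> s \<and> s < Suc n \<longrightarrow> B s) \<longleftrightarrow> B n \<and> (\<forall>s. Suc t \<le> s \<and> s < n \<longrightarrow> B s)"
      using t by (auto simp: less_Suc_eq)
    thus "(-1::int) ^ (Suc n - Suc t) *
            (if (\<forall>s. Suc t \<le> s \<and> s < Suc n \<longrightarrow> B s) \<and> (\<forall>i<t. \<not> B i) then 1 else 0) =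
          - (if B n then (-1::int) ^ (n - Suc t) *
            (if (\<forall>s. Suc t \<le> s \<and> s < n \<longrightarrow> B s) \<and> (\<forall>i<t. \<not> B i) then 1 else 0) else 0)"
      unfolding e by auto
  qed
  also have "\<dots> = - (if B n then ?S n else 0)"
    by (simp add: sum_negf)
  finally have A: "(\<Sum>t<n. (-1::int) ^ (Suc n - Suc t) *
            (if (\<forall>s. Suc t \<le> s \<and> s < Suc n \<longrightarrow> B s) \<and> (\<forall>i<t. \<not> B i) then 1 else 0))
        = - (if B n then ?S n else 0)" .
  have "?S (Suc n) = (\<Sum>t<n. (-1::int) ^ (Suc n - Suc t) *
            (if (\<forall>s. Suc t \<le> s \<and> s < Suc n \<longrightarrow> B s) \<and> (\<forall>i<t. \<not> B i) then 1 else 0))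
        + (if \<forall>i<n. \<not> B i then 1 else 0)"
    by (simp add: sum.lessThan_Suc)
  also have "\<dots> = - (if B n then ?S n else 0) + (if \<forall>i<n. \<not> B i then 1 else 0)"
    by (simp only: A)
  also have "\<dots> = (if \<forall>i<Suc n. \<not> B i then 1 else 0) - (-1) ^ Suc n * (if \<forall>i<Suc n. B i then 1 else 0)"
    unfolding Suc.IH by (auto simp: less_Suc_eq)
  finally show ?case .
qed

definition cB :: "nat list \<Rightarrow> nat \<Rightarrow> bool" where
  "cB xs i = bad (xs ! i) (xs ! (Suc i mod length xs))"

lemma Wj_rot:
  assumes n: "length xs = n" and j: "j < n"
  shows "Wj j (rotate (n - j) xs) = (-1) ^ j *
     (if (\<forall>s. n - j \<le> s \<and> s < n \<longrightarrow> cB xs s) \<and> (\<forall>i. Suc i < n - j \<longrightarrow> \<not> cB xs i) then 1 else 0)"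
proof -
  let ?ys = "rotate (n - j) xs"
  have ly: "length ?ys = n" using n by simp
  have ysn: "?ys ! i = xs ! (n - j + i)" if "i < j" for i
    using that j n by (simp add: nth_rotate)
  have ysn2: "?ys ! Suc i = xs ! (Suc (n - j + i) mod n)" if "i < j" for i
    using that j n by (subst nth_rotate) auto
  have a: "successively bad (take (Suc j) ?ys) \<longleftrightarrow> (\<forall>s. n - j \<le> s \<and> s < n \<longrightarrow> cB xs s)"
  proof -
    have "successively bad (take (Suc j) ?ys) \<longleftrightarrow> (\<forall>i<j. bad (?ys ! i) (?ys ! Suc i))"
      unfolding successively_conv_nth using ly j by auto
    also have "\<dots> \<longleftrightarrow> (\<forall>i<j. cB xs (n - j + i))"
    proof -
      have "bad (?ys ! i) (?ys ! Suc i) = cB xs (n - j + i)" if "i < j" for i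
        unfolding ysn[OF that] ysn2[OF that] cB_def n ..
      thus ?thesis by auto
    qed
    also have "\<dots> \<longleftrightarrow> (\<forall>s. n - j \<le> s \<and> s < n \<longrightarrow> cB xs s)"
    proof safe
      fix s assume "\<forall>i<j. cB xs (n - j + i)" "n - j \<le> s" "s < n"
      thus "cB xs s" by (metis add_diff_inverse_nat j le_add_diff_inverse less_diff_conv2 not_less
                  le_less_trans less_imp_le_nat diff_less_mono)
    next
      fix i assume "\<forall>s. n - j \<le> s \<and> s < n \<longrightarrow> cB xs s" "i < j"
      moreover have "n - j \<le> n - j + i" "n - j + i < n" using j \<open>i < j\<close> by auto
      ultimately show "cB xs (n - j + i)" by blast
    qed
    finally show ?thesis .
  qed
  have b: "drop j ?ys = take (n - j) xs"
  proof (cases "j = 0")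
    case True thus ?thesis using n by simp
  next
    case False
    hence "(n - j) mod n = n - j" using j by simp
    hence "?ys = drop (n - j) xs @ take (n - j) xs" using n by (simp add: rotate_drop_take)
    moreover have "length (drop (n - j) xs) = j" using n j by simp
    ultimately show ?thesis by simp
  qed
  have c: "W (take (n - j) xs) = (if \<forall>i. Suc i < n - j \<longrightarrow> \<not> cB xs i then 1 else 0)"
  proof -
    have "successively (\<lambda>a b. \<not> bad a b) (take (n - j) xs) \<longleftrightarrow> (\<forall>i. Suc i < n - j \<longrightarrow> \<not> cB xs i)"
      unfolding successively_conv_nth using n j by (auto simp: cB_def)
    thus ?thesis by (simp add: W_eq)
  qed
  show ?thesis
    using Wj_eq[of j ?ys] ly j unfolding a b c by auto
qed

lemma per_xs:
  assumes n: "length xs = n"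
  shows "(\<Sum>j<n. Wj j (rotate (n - j) xs)) =
         (if \<forall>i<n. \<not> cB xs i then 1 else 0) - (-1) ^ n * (if \<forall>i<n. cB xs i then 1 else 0)"
proof -
  have "(\<Sum>j<n. Wj j (rotate (n - j) xs)) = (\<Sum>t<n. Wj (n - Suc t) (rotate (n - (n - Suc t)) xs))"
    by (rule sum.nat_diff_reindex[symmetric])
  also have "\<dots> = (\<Sum>t<n. (-1::int) ^ (n - Suc t) *
            (if (\<forall>s. Suc t \<le> s \<and> s < n \<longrightarrow> cB xs s) \<and> (\<forall>i<t. \<not> cB xs i) then 1 else 0))"
  proof (rule sum.cong[OF refl])
    fix t assume "t \<in> {..<n}"
    hence t: "t < n" by simp
    hence e: "n - (n - Suc t) = Suc t" by simp
    show "Wj (n - Suc t) (rotate (n - (n - Suc t)) xs) = (-1::int) ^ (n - Suc t) *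
            (if (\<forall>s. Suc t \<le> s \<and> s < n \<longrightarrow> cB xs s) \<and> (\<forall>i<t. \<not> cB xs i) then 1 else 0)"
      using Wj_rot[OF n, of "n - Suc t"] t unfolding e by simp
  qed
  also have "\<dots> = (if \<forall>i<n. \<not> cB xs i then 1 else 0) - (-1) ^ n * (if \<forall>i<n. cB xs i then 1 else 0)"
    by (rule alt_ident)
  finally show ?thesis .
qed


definition PL :: "nat \<Rightarrow> nat list set" where "PL n = {xs. distinct xs \<and> set xs = {1..n}}"
definition PS :: "nat \<Rightarrow> nat list list set" where
  "PS n = {ps. (\<forall>p\<in>set ps. validp p) \<and> concat ps \<in> PL n}"

lemma PL_length: "xs \<in> PL n \<Longrightarrow> length xs = n"
  unfolding PL_def using distinct_card by fastforce

lemma finite_PL: "finite (PL n)"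
proof -
  have "PL n \<subseteq> {xs. set xs \<subseteq> {1..n} \<and> length xs \<le> n}" using PL_length by (auto simp: PL_def)
  moreover have "finite {xs. set xs \<subseteq> {1..n} \<and> length xs \<le> n}" by (rule finite_lists_length_le) simp
  ultimately show ?thesis by (rule finite_subset)
qed

lemma PS_UN: "PS n = (\<Union>xs\<in>PL n. splits xs)"
  by (auto simp: PS_def splits_def)

lemma finite_PS: "finite (PS n)"
  unfolding PS_UN using finite_PL finite_splits by blast

lemma inj_rotate: "inj (rotate k)"
proof (induction k)
  case 0 thus ?case by simp
next
  case (Suc k)
  have e: "rotate (Suc k) = rotate1 \<circ> rotate k" by (rule ext) simp
  show ?case unfolding e by (rule inj_compose[OF inj_rotate1 Suc.IH])
qed

lemma surj_rotate: "surj (rotate k)"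
proof (induction k)
  case 0 thus ?case by simp
next
  case (Suc k)
  have e: "rotate (Suc k) = rotate1 \<circ> rotate k" by (rule ext) simp
  show ?case unfolding e by (rule comp_surj[OF Suc.IH surj_rotate1])
qed

lemma rotate_PL: "rotate k ` PL n = PL n"
proof (intro equalityI subsetI)
  fix x assume "x \<in> rotate k ` PL n" thus "x \<in> PL n" by (auto simp: PL_def)
next
  fix x assume x: "x \<in> PL n"
  obtain y where "x = rotate k y" using surj_rotate[of k] by (metis surjD)
  thus "x \<in> rotate k ` PL n" using x by (auto simp: PL_def)
qed

lemma sum_j_le: "(L::nat) \<le> n \<Longrightarrow> (\<Sum>j<n. if j < L then (c::int) else 0) = c * int L"
proof -
  assume "L \<le> n"
  have "(\<Sum>j<n. if j < L then c else 0) = (\<Sum>j\<in>{j\<in>{..<n}. j < L}. c)"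
    by (rule sum.inter_filter[symmetric]) simp
  also have "{j\<in>{..<n}. j < L} = {..<L}" using \<open>L \<le> n\<close> by auto
  finally show ?thesis by simp
qed

lemma main_chain:
  assumes "n \<ge> 1"
  shows "(\<Sum>xs\<in>PL n. \<Sum>j<n. Wj j (rotate (n - j) xs)) =
         (\<Sum>ps\<in>PS n. (-1) ^ (n + length ps) * int (length (hd ps)))"
proof -
  let ?f = "\<lambda>j ps. if j < length (hd ps) then (-1::int) ^ (n + length ps) else 0"
  have "(\<Sum>xs\<in>PL n. \<Sum>j<n. Wj j (rotate (n - j) xs)) = (\<Sum>j<n. \<Sum>xs\<in>PL n. Wj j (rotate (n - j) xs))"
    by (rule sum.swap)
  also have "\<dots> = (\<Sum>j<n. \<Sum>ys\<in>PL n. Wj j ys)"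
  proof (rule sum.cong[OF refl])
    fix j
    have "(\<Sum>ys\<in>PL n. Wj j ys) = (\<Sum>ys\<in>rotate (n - j) ` PL n. Wj j ys)" by (simp only: rotate_PL)
    also have "\<dots> = (\<Sum>xs\<in>PL n. Wj j (rotate (n - j) xs))"
    proof -
      have inj: "inj_on (rotate (n - j)) (PL n)" using inj_rotate by (rule inj_on_subset) simp
      show ?thesis using sum.reindex[OF inj, of "Wj j"] by (simp add: comp_def)
    qed
    finally show "(\<Sum>xs\<in>PL n. Wj j (rotate (n - j) xs)) = (\<Sum>ys\<in>PL n. Wj j ys)" by simp
  qed
  also have "\<dots> = (\<Sum>j<n. \<Sum>ys\<in>PL n. \<Sum>ps\<in>splits ys. ?f j ps)"
  proof (intro sum.cong refl)
    fix j ys assume "ys \<in> PL n"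
    hence l: "length ys = n" by (rule PL_length)
    show "Wj j ys = (\<Sum>ps\<in>splits ys. ?f j ps)" unfolding Wj_def l ..
  qed
  also have "\<dots> = (\<Sum>j<n. \<Sum>ps\<in>PS n. ?f j ps)"
  proof (rule sum.cong[OF refl])
    fix j
    have "(\<Sum>ps\<in>PS n. ?f j ps) = (\<Sum>ys\<in>PL n. \<Sum>ps\<in>splits ys. ?f j ps)"
      unfolding PS_UN
      by (rule sum.UNION_disjoint) (auto simp: finite_PL finite_splits, auto simp: splits_def)
    thus "(\<Sum>ys\<in>PL n. \<Sum>ps\<in>splits ys. ?f j ps) = (\<Sum>ps\<in>PS n. ?f j ps)" by simp
  qed
  also have "\<dots> = (\<Sum>ps\<in>PS n. \<Sum>j<n. ?f j ps)"
    by (rule sum.swap)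
  also have "\<dots> = (\<Sum>ps\<in>PS n. (-1) ^ (n + length ps) * int (length (hd ps)))"
  proof (rule sum.cong[OF refl])
    fix ps assume ps: "ps \<in> PS n"
    hence c: "concat ps \<in> PL n" by (simp add: PS_def)
    hence "length (concat ps) = n" by (rule PL_length)
    hence "ps \<noteq> []" using assms by auto
    hence "length (hd ps) \<le> n" using \<open>length (concat ps) = n\<close> by (cases ps) auto
    thus "(\<Sum>j<n. ?f j ps) = (-1) ^ (n + length ps) * int (length (hd ps))"
      by (rule sum_j_le)
  qed
  finally show ?thesis .
qed

lemma bad_1: "bad 1 y \<Longrightarrow> y = 0 \<or> y = 2" and bad_1': "bad y 1 \<Longrightarrow> y = 0 \<or> y = 2"
  by (auto simp: bad_def)

lemma not_all_cB:
  assumes n: "n \<ge> 3" and xs: "xs \<in> PL n"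
  shows "\<not> (\<forall>i<n. cB xs i)"
proof
  assume all: "\<forall>i<n. cB xs i"
  have len: "length xs = n" using xs by (rule PL_length)
  have d: "distinct xs" and s: "set xs = {1..n}" using xs by (auto simp: PL_def)
  have "1 \<in> set xs" using s n by auto
  then obtain i where i: "i < n" "xs ! i = 1" by (metis in_set_conv_nth len)
  define a where "a = (if i = n - 1 then 0 else Suc i)"
  define b where "b = (if i = 0 then n - 1 else i - 1)"
  have a: "a < n" "Suc i mod n = a" using i n by (auto simp: a_def)
  have b: "b < n" "Suc b mod n = i" using i n by (auto simp: b_def)
  have "bad 1 (xs ! a)" using all i a len by (auto simp: cB_def)
  moreover have "xs ! a \<noteq> 0" using a s len by (metis atLeastAtMost_iff not_one_le_zero nth_mem)
  ultimately have "xs ! a = 2" unfolding bad_def by auto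
  have "bad (xs ! b) 1" using all b i len by (metis cB_def)
  moreover have "xs ! b \<noteq> 0" using b s len by (metis atLeastAtMost_iff not_one_le_zero nth_mem)
  ultimately have "xs ! b = 2" unfolding bad_def by auto
  hence "a = b" using \<open>xs ! a = 2\<close> d a b len by (metis nth_eq_iff_index_eq)
  thus False using i n by (auto simp: a_def b_def split: if_splits)
qed

lemma card_cyc:
  assumes "n \<ge> 3"
  shows "int (card {xs\<in>PL n. \<forall>i<n. \<not> cB xs i}) =
         (\<Sum>ps\<in>PS n. (-1) ^ (n + length ps) * int (length (hd ps)))"
proof -
  have "int (card {xs\<in>PL n. \<forall>i<n. \<not> cB xs i}) = (\<Sum>xs\<in>PL n. if \<forall>i<n. \<not> cB xs i then 1 else 0)"
    by (simp add: sum.inter_filter[symmetric] finite_PL)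
  also have "\<dots> = (\<Sum>xs\<in>PL n. \<Sum>j<n. Wj j (rotate (n - j) xs))"
  proof (rule sum.cong[OF refl])
    fix xs assume xs: "xs \<in> PL n"
    show "(if \<forall>i<n. \<not> cB xs i then 1 else 0) = (\<Sum>j<n. Wj j (rotate (n - j) xs))"
      using per_xs[OF PL_length[OF xs]] not_all_cB[OF assms xs] by simp
  qed
  also have "\<dots> = (\<Sum>ps\<in>PS n. (-1) ^ (n + length ps) * int (length (hd ps)))"
    using assms by (intro main_chain) simp
  finally show ?thesis .
qed


definition PSk :: "nat \<Rightarrow> nat \<Rightarrow> nat list list set" where
  "PSk n k = {ps\<in>PS n. length ps = k}"

lemma finite_PSk: "finite (PSk n k)"
  unfolding PSk_def using finite_PS by simp

lemma mset_concat_eq: "mset ps = mset qs \<Longrightarrow> mset (concat ps) = mset (concat qs)"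
proof -
  assume "mset ps = mset qs"
  hence "mset (map mset ps) = mset (map mset qs)" by simp
  hence "sum_mset (mset (map mset ps)) = sum_mset (mset (map mset qs))" by simp
  thus ?thesis by (simp only: mset_concat sum_mset_sum_list)
qed

lemma PS_mset: "ps \<in> PS n \<Longrightarrow> mset qs = mset ps \<Longrightarrow> qs \<in> PS n"
proof -
  assume ps: "ps \<in> PS n" and m: "mset qs = mset ps"
  have "set qs = set ps" using m by (rule mset_eq_setD)
  moreover have "mset (concat qs) = mset (concat ps)" using m by (rule mset_concat_eq)
  hence "set (concat qs) = set (concat ps)" "distinct (concat qs) = distinct (concat ps)"
    by (rule mset_eq_setD, rule mset_eq_imp_distinct_iff)
  ultimately show ?thesis using ps by (auto simp: PS_def PL_def)
qed

definition swp :: "nat \<Rightarrow> nat list list \<Rightarrow> nat list list" where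
  "swp i ps = ps[0 := ps ! i, i := ps ! 0]"

lemma swp_PSk: "i < k \<Longrightarrow> ps \<in> PSk n k \<Longrightarrow> swp i ps \<in> PSk n k"
proof -
  assume i: "i < k" and ps: "ps \<in> PSk n k"
  hence l: "i < length ps" "0 < length ps" by (auto simp: PSk_def)
  have "mset (swp i ps) = mset ps" unfolding swp_def by (rule mset_swap[OF l(1) l(2)])
  thus ?thesis using ps PS_mset[of ps n "swp i ps"] by (auto simp: PSk_def swp_def)
qed

lemma swp_swp: "i < length ps \<Longrightarrow> swp i (swp i ps) = ps"
proof -
  assume i: "i < length ps"
  hence "0 < length ps" by linarith
  show ?thesis unfolding swp_def
    by (rule nth_equalityI) (use i \<open>0 < length ps\<close> in \<open>auto simp: nth_list_update\<close>)
qed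

lemma swp_nth0: "i < length ps \<Longrightarrow> swp i ps ! 0 = ps ! i"
proof -
  assume i: "i < length ps"
  hence "0 < length ps" by linarith
  thus ?thesis unfolding swp_def using i by (auto simp: nth_list_update)
qed

lemma sum_swp:
  assumes i: "i < k"
  shows "(\<Sum>ps\<in>PSk n k. length (ps ! i)) = (\<Sum>ps\<in>PSk n k. length (ps ! 0))"
proof -
  have len: "length ps = k" if "ps \<in> PSk n k" for ps using that by (simp add: PSk_def)
  have img: "swp i ` PSk n k = PSk n k"
  proof (intro equalityI subsetI)
    fix x assume "x \<in> swp i ` PSk n k" thus "x \<in> PSk n k" using swp_PSk[OF i] by auto
  next
    fix x assume x: "x \<in> PSk n k"
    hence "x = swp i (swp i x)" using swp_swp i len by simp
    moreover have "swp i x \<in> PSk n k" using swp_PSk[OF i x] .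
    ultimately show "x \<in> swp i ` PSk n k" by blast
  qed
  have inj: "inj_on (swp i) (PSk n k)"
    by (rule inj_on_inverseI[where g = "swp i"]) (use swp_swp i len in auto)
  have "(\<Sum>ps\<in>PSk n k. length (ps ! 0)) = (\<Sum>ps\<in>swp i ` PSk n k. length (ps ! 0))"
    by (simp only: img)
  also have "\<dots> = (\<Sum>ps\<in>PSk n k. length (swp i ps ! 0))"
    using sum.reindex[OF inj, of "\<lambda>ps. length (ps ! 0)"] by (simp add: comp_def)
  also have "\<dots> = (\<Sum>ps\<in>PSk n k. length (ps ! i))"
    by (rule sum.cong[OF refl]) (use swp_nth0 i len in auto)
  finally show ?thesis by simp
qed

lemma sym_count: "k * (\<Sum>ps\<in>PSk n k. length (hd ps)) = n * card (PSk n k)"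
proof (cases "k = 0")
  case True
  have "PSk n 0 \<subseteq> {[]}" by (auto simp: PSk_def)
  moreover have "[] \<in> PSk n 0 \<Longrightarrow> n = 0" by (auto simp: PSk_def PS_def PL_def)
  ultimately have "n * card (PSk n 0) = 0"
    by (cases "PSk n 0 = {}") (auto dest: subset_singletonD)
  thus ?thesis using True by simp
next
  case False
  have "n * card (PSk n k) = (\<Sum>ps\<in>PSk n k. n)" by simp
  also have "\<dots> = (\<Sum>ps\<in>PSk n k. \<Sum>i<k. length (ps ! i))"
  proof (rule sum.cong[OF refl])
    fix ps assume ps: "ps \<in> PSk n k"
    hence "length (concat ps) = n" "length ps = k"
      using PL_length by (auto simp: PSk_def PS_def)
    thus "n = (\<Sum>i<k. length (ps ! i))"
      by (simp add: length_concat sum_list_sum_nth atLeast0LessThan)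
  qed
  also have "\<dots> = (\<Sum>i<k. \<Sum>ps\<in>PSk n k. length (ps ! i))" by (rule sum.swap)
  also have "\<dots> = (\<Sum>i<k. \<Sum>ps\<in>PSk n k. length (ps ! 0))"
    by (rule sum.cong[OF refl]) (rule sum_swp, simp)
  also have "\<dots> = k * (\<Sum>ps\<in>PSk n k. length (hd ps))"
  proof -
    have "(\<Sum>ps\<in>PSk n k. length (ps ! 0)) = (\<Sum>ps\<in>PSk n k. length (hd ps))"
    proof (rule sum.cong[OF refl])
      fix ps assume "ps \<in> PSk n k"
      hence "ps \<noteq> []" using False by (auto simp: PSk_def)
      thus "length (ps ! 0) = length (hd ps)" by (simp add: hd_conv_nth)
    qed
    thus ?thesis by simp
  qed
  finally show ?thesis by simp
qed


declare set_concat [simp del]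

lemma succ_bad_upt: "successively bad [a..<b]"
  unfolding successively_conv_nth by (auto simp: bad_def)

lemma bad_sym: "(\<lambda>x y. bad y x) = bad" by (auto simp: bad_def fun_eq_iff)

lemma succ_bad_rev_upt: "successively bad (rev [a..<b])"
  unfolding successively_rev bad_sym by (rule succ_bad_upt)

lemma piece_interval:
  "p \<noteq> [] \<Longrightarrow> successively bad p \<Longrightarrow> distinct p \<Longrightarrow>
   \<exists>a. p = [a..<a + length p] \<or> p = rev [a..<a + length p]"
proof (induction p)
  case Nil thus ?case by simp
next
  case (Cons x r)
  show ?case
  proof (cases "r = []")
    case True thus ?thesis by (intro exI[of _ x]) simp
  next
    case False
    have sb: "successively bad r" and bx: "bad x (hd r)"
      using Cons.prems(2) False by (auto simp: successively_Cons)
    have dr: "distinct r" and xr: "x \<notin> set r" using Cons.prems(3) by auto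
    obtain a where a: "r = [a..<a + length r] \<or> r = rev [a..<a + length r]"
      using Cons.IH[OF False sb dr] by blast
    obtain m where m: "length r = Suc m" using False by (cases r) auto
    from a show ?thesis
    proof
      assume r: "r = [a..<a + length r]"
      hence r': "r = [a..<a + Suc m]" using m by metis
      have hr: "hd r = a" unfolding r' by (simp add: upt_conv_Cons del: upt_Suc)
      from bx[unfolded hr bad_def] show ?thesis
      proof
        assume x: "x = Suc a"
        have "m = 0"
        proof (rule ccontr)
          assume "m \<noteq> 0"
          hence "x \<in> set r" using x r m by (subst r) auto
          thus False using xr by simp
        qed
        hence "x # r = rev [a..<a + length (x # r)]" using r m x by simp
        thus ?thesis by blast
      next
        assume x: "a = Suc x"
        have "x # r = [x..<x + length (x # r)]"
          using r m x by (simp add: upt_conv_Cons)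
        thus ?thesis by blast
      qed
    next
      assume r: "r = rev [a..<a + length r]"
      hence hr: "hd r = a + m" using m by (simp add: hd_rev)
      from bx[unfolded hr bad_def] show ?thesis
      proof
        assume x: "x = Suc (a + m)"
        have "x # r = rev [a..<a + length (x # r)]" using r m x by simp
        thus ?thesis by blast
      next
        assume x: "a + m = Suc x"
        have "m = 0"
        proof (rule ccontr)
          assume "m \<noteq> 0"
          hence "x \<in> set r" using x r m by (subst r) auto
          thus False using xr by simp
        qed
        hence "x # r = [x..<x + length (x # r)]" using r m x by simp
        thus ?thesis by blast
      qed
    qed
  qed
qed

definition OP :: "nat \<Rightarrow> nat \<Rightarrow> nat list set" where
  "OP n c = {[Suc n - c..<Suc n], rev [Suc n - c..<Suc n]}"

lemma OP_props:
  assumes c: "1 \<le> c" "c \<le> n" and p: "p \<in> OP n c"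
  shows "validp p" "distinct p" "set p = {Suc n - c..n}" "length p = c"
proof -
  let ?U = "[Suc n - c..<Suc n]"
  have pU: "p = ?U \<or> p = rev ?U" using p by (simp add: OP_def)
  have sU: "set ?U = {Suc n - c..n}" by auto
  have lU: "length ?U = c" using c by simp
  have nU: "?U \<noteq> []" using c by simp
  show "validp p" using pU nU succ_bad_upt[of "Suc n - c" "Suc n"] succ_bad_rev_upt[of "Suc n - c" "Suc n"]
    unfolding validp_def by (auto simp del: upt_Suc)
  show "distinct p" using pU by auto
  show "set p = {Suc n - c..n}" using pU sU by auto
  show "length p = c" using pU lU by auto
qed

lemma card_OP: assumes "1 \<le> c" "c \<le> n" shows "card (OP n c) = (if c = 1 then 1 else 2)"
proof (cases "c = 1")
  case True thus ?thesis by (simp add: OP_def)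
next
  case False
  let ?U = "[Suc n - c..<Suc n]"
  have lU: "length ?U = c" using assms by simp
  have "?U ! 0 = Suc n - c" using assms by (simp del: upt_Suc)
  moreover have "rev ?U ! 0 = n"
  proof -
    have "rev ?U ! 0 = ?U ! (c - 1)" using assms lU by (simp add: rev_nth del: upt_Suc)
    also have "\<dots> = n" using assms by (simp del: upt_Suc)
    finally show ?thesis .
  qed
  ultimately have "?U ! 0 \<noteq> rev ?U ! 0" using False assms by simp
  hence "[Suc n - c..<Suc n] \<noteq> rev [Suc n - c..<Suc n]" by metis
  thus ?thesis using False by (simp add: OP_def)
qed

definition ins :: "nat \<Rightarrow> 'a \<Rightarrow> 'a list \<Rightarrow> 'a list" where
  "ins i p ps = take i ps @ p # drop i ps"

definition Dom :: "nat \<Rightarrow> nat \<Rightarrow> (nat \<times> nat list \<times> nat \<times> nat list list) set" where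
  "Dom n k = (SIGMA c:{1..n}. SIGMA p:OP n c. {..k} \<times> PSk (n - c) k)"

definition Phi :: "nat \<times> nat list \<times> nat \<times> nat list list \<Rightarrow> nat list list" where
  "Phi x = (case x of (c, p, i, ps) \<Rightarrow> ins i p ps)"

lemma PSk_D:
  assumes "ps \<in> PSk m k"
  shows "length ps = k" "\<forall>q\<in>set ps. validp q" "distinct (concat ps)" "set (concat ps) = {1..m}"
  using assms by (auto simp: PSk_def PS_def PL_def)

lemma PSk_I:
  assumes "length ps = k" "\<forall>q\<in>set ps. validp q" "distinct (concat ps)" "set (concat ps) = {1..m}"
  shows "ps \<in> PSk m k"
  using assms by (auto simp: PSk_def PS_def PL_def)

lemma Phi_into:
  assumes x: "(c, p, i, ps) \<in> Dom n k"
  shows "ins i p ps \<in> PSk n (Suc k)"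
proof -
  have c: "1 \<le> c" "c \<le> n" and p: "p \<in> OP n c" and i: "i \<le> k" and ps: "ps \<in> PSk (n - c) k"
    using x by (auto simp: Dom_def)
  note pp = OP_props[OF c p]
  note psp = PSk_D[OF ps]
  let ?L = "concat (take i ps)" and ?R = "concat (drop i ps)"
  have cps: "concat ps = ?L @ ?R" by (metis append_take_drop_id concat_append)
  have cq: "concat (ins i p ps) = ?L @ p @ ?R" by (simp add: ins_def)
  have LR: "set ?L \<union> set ?R = {1..n - c}" "distinct ?L" "distinct ?R" "set ?L \<inter> set ?R = {}"
    using psp(3,4) unfolding cps by auto
  have disj: "set p \<inter> (set ?L \<union> set ?R) = {}" using LR(1) pp(3) c by auto
  show ?thesis
  proof (rule PSk_I)
    show "length (ins i p ps) = Suc k" using i psp(1) by (simp add: ins_def)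
    show "\<forall>q\<in>set (ins i p ps). validp q"
      using psp(2) pp(1) by (auto simp: ins_def dest: in_set_takeD in_set_dropD)
    show "distinct (concat (ins i p ps))" unfolding cq using LR pp(2) disj by auto
    have e: "set (concat (ins i p ps)) = (set ?L \<union> set ?R) \<union> set p"
      unfolding cq by (simp only: set_append) blast
    show "set (concat (ins i p ps)) = {1..n}" unfolding e LR(1) pp(3)
      using c by auto
  qed
qed

definition Psi :: "nat \<Rightarrow> nat list list \<Rightarrow> nat \<times> nat list \<times> nat \<times> nat list list" where
  "Psi n qs = (let i = length (takeWhile (\<lambda>q. n \<notin> set q) qs); p = qs ! i
               in (length p, p, i, take i qs @ drop (Suc i) qs))"

lemma Psi_Phi:
  assumes x: "x \<in> Dom n k"
  shows "Psi n (Phi x) = x"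
proof -
  obtain c p i ps where xe: "x = (c, p, i, ps)" by (cases x) auto
  have c: "1 \<le> c" "c \<le> n" and p: "p \<in> OP n c" and i: "i \<le> k" and ps: "ps \<in> PSk (n - c) k"
    using x xe by (auto simp: Dom_def)
  note pp = OP_props[OF c p]
  note psp = PSk_D[OF ps]
  have nq: "n \<notin> set q" if "q \<in> set ps" for q
  proof
    assume "n \<in> set q"
    hence "n \<in> set (concat ps)" using that by (auto simp: set_concat)
    hence "n \<in> {1..n - c}" using psp(4) by metis
    thus False using c by auto
  qed
  have np: "n \<in> set p" using pp(3) c by auto
  have lt: "length (take i ps) = i" using i psp(1) by simp
  have tw: "takeWhile (\<lambda>q. n \<notin> set q) (ins i p ps) = take i ps"
    unfolding ins_def using nq np by (subst takeWhile_append2) (auto dest: in_set_takeD)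
  have "Psi n (ins i p ps) = (length p, p, i, take i ps @ drop i ps)"
    unfolding Psi_def Let_def tw lt using lt by (simp add: ins_def nth_append)
  thus ?thesis using xe pp(4) by (simp add: Phi_def)
qed

lemma Phi_inj: "inj_on Phi (Dom n k)"
  by (rule inj_on_inverseI[where g = "Psi n"]) (rule Psi_Phi)

lemma Phi_onto:
  assumes qs: "qs \<in> PSk n (Suc k)"
  shows "qs \<in> Phi ` Dom n k"
proof -
  note qsp = PSk_D[OF qs]
  have "qs \<noteq> []" using qsp(1) by auto
  then obtain q0 where "q0 \<in> set qs" by (cases qs) auto
  hence "q0 \<noteq> []" using qsp(2) by (auto simp: validp_def)
  hence "concat qs \<noteq> []" using \<open>q0 \<in> set qs\<close> by (auto simp: set_concat)
  hence "set (concat qs) \<noteq> {}" by simp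
  hence "{1..n} \<noteq> {}" using qsp(4) by metis
  hence n1: "1 \<le> n" by simp
  hence "n \<in> {1..n}" by simp
  hence "n \<in> set (concat qs)" using qsp(4) by metis
  then obtain q where q: "q \<in> set qs" "n \<in> set q" by (auto simp: set_concat)
  then obtain i where i: "i < length qs" "qs ! i = q" by (metis in_set_conv_nth)
  define p where "p = qs ! i"
  define c where "c = length p"
  define ps where "ps = take i qs @ drop (Suc i) qs"
  let ?L = "concat (take i qs)" and ?R = "concat (drop (Suc i) qs)"
  have qe: "qs = take i qs @ p # drop (Suc i) qs" unfolding p_def by (rule id_take_nth_drop[OF i(1)])
  have cq: "concat qs = ?L @ p @ ?R" by (subst qe) simp
  have dall: "distinct ?L" "distinct p" "distinct ?R" "set ?L \<inter> set p = {}"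
      "set ?L \<inter> set ?R = {}" "set p \<inter> set ?R = {}"
    using qsp(3) unfolding cq by auto
  have "set (concat qs) = set ?L \<union> set p \<union> set ?R" unfolding cq by (simp only: set_append Un_assoc)
  hence sall: "set ?L \<union> set p \<union> set ?R = {1..n}" using qsp(4) by simp
  have vp: "validp p" using qsp(2) i unfolding p_def by auto
  have np: "n \<in> set p" using q i p_def by simp
  obtain a where a: "p = [a..<a + c] \<or> p = rev [a..<a + c]"
    using piece_interval[of p] vp dall(2) unfolding c_def validp_def by blast
  have c1: "1 \<le> c" using vp unfolding c_def validp_def by (cases p) auto
  have sp: "set p = {a..<a + c}" using a by auto
  have "a \<in> set p" using sp c1 by auto
  hence a1: "1 \<le> a" using sall by auto
  have "a + c - 1 \<in> set p" using sp c1 by auto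
  hence "a + c - 1 \<le> n" using sall by auto
  moreover have "n < a + c" using np sp by auto
  ultimately have ac: "a + c = Suc n" by simp
  have cn: "c \<le> n" using ac a1 by simp
  have aeq: "a = Suc n - c" using ac by simp
  have pOP: "p \<in> OP n c" using a unfolding OP_def aeq using ac by auto
  have cps: "concat ps = ?L @ ?R" by (simp add: ps_def)
  have psin: "ps \<in> PSk (n - c) k"
  proof (rule PSk_I)
    show "length ps = k" using i qsp(1) by (simp add: ps_def)
    show "\<forall>q\<in>set ps. validp q" using qsp(2) by (auto simp: ps_def dest: in_set_takeD in_set_dropD)
    show "distinct (concat ps)" unfolding cps using dall by auto
    show "set (concat ps) = {1..n - c}"
    proof -
      have "set (concat ps) = {1..n} - set p" unfolding cps using sall dall by auto
      also have "\<dots> = {1..n - c}" unfolding sp using ac by auto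
      finally show ?thesis .
    qed
  qed
  have dom: "(c, p, i, ps) \<in> Dom n k"
    unfolding Dom_def using c1 cn pOP psin i qsp(1) by auto
  have "Phi (c, p, i, ps) = qs"
  proof -
    have "take i ps = take i qs" using i by (simp add: ps_def)
    moreover have "drop i ps = drop (Suc i) qs" using i by (simp add: ps_def)
    ultimately show ?thesis unfolding Phi_def ins_def using qe by simp
  qed
  thus ?thesis using dom by (metis image_eqI)
qed

lemma Phi_image: "Phi ` Dom n k = PSk n (Suc k)"
proof
  show "Phi ` Dom n k \<subseteq> PSk n (Suc k)"
  proof
    fix y assume "y \<in> Phi ` Dom n k"
    then obtain x where x: "x \<in> Dom n k" "y = Phi x" by blast
    obtain c p i ps where xe: "x = (c, p, i, ps)" by (cases x) auto
    show "y \<in> PSk n (Suc k)" using Phi_into[of c p i ps n k] x xe by (simp add: Phi_def)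
  qed
  show "PSk n (Suc k) \<subseteq> Phi ` Dom n k" using Phi_onto by blast
qed

lemma finite_OP: "finite (OP n c)" by (simp add: OP_def)

lemma card_rec:
  "card (PSk n (Suc k)) = (\<Sum>c\<in>{1..n}. card (OP n c) * (Suc k * card (PSk (n - c) k)))"
proof -
  have "card (PSk n (Suc k)) = card (Dom n k)"
    using card_image[OF Phi_inj[of n k]] Phi_image[of n k] by simp
  also have "\<dots> = (\<Sum>c\<in>{1..n}. card (OP n c) * (Suc k * card (PSk (n - c) k)))"
    unfolding Dom_def
    by (simp add: card_SigmaI finite_OP finite_PSk card_cartesian_product finite_SigmaI)
  finally show ?thesis .
qed

lemma card_PSk0: "card (PSk n 0) = (if n = 0 then 1 else 0)"
proof -
  have "PSk n 0 = (if n = 0 then {[]} else {})"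
    by (auto simp: PSk_def PS_def PL_def)
  thus ?thesis by simp
qed


lemma sign_lemma:
  assumes "1 \<le> c" "c \<le> n"
  shows "(-1::real) ^ (n + Suc k) * (-1) ^ (c - 1) = (-1) ^ (n - c + k)"
proof -
  have e: "n + Suc k + (c - 1) = (n - c + k) + 2 * c" using assms by simp
  have "(-1::real) ^ (n + Suc k) * (-1) ^ (c - 1) = (-1) ^ (n + Suc k + (c - 1))"
    by (rule power_add[symmetric])
  also have "\<dots> = (-1) ^ ((n - c + k) + 2 * c)" by (simp only: e)
  also have "\<dots> = (-1) ^ (n - c + k)" by (simp add: power_add power_mult)
  finally show ?thesis .
qed

lemma ww_OP: "1 \<le> c \<Longrightarrow> c \<le> n \<Longrightarrow> ww $ c = (-1) ^ (c - 1) * real (card (OP n c))"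
  by (simp add: ww_nth card_OP)

lemma N_formula: "real (card (PSk n k)) = (-1) ^ (n + k) * fact k * (ww ^ k) $ n"
proof (induction k arbitrary: n)
  case 0 thus ?case by (simp add: card_PSk0)
next
  case (Suc k)
  have "(ww ^ Suc k) $ n = (\<Sum>i=0..n. ww $ i * (ww ^ k) $ (n - i))"
    by (simp add: fps_mult_nth)
  also have "\<dots> = (\<Sum>c\<in>{1..n}. ww $ c * (ww ^ k) $ (n - c))"
    by (simp add: sum.atLeast_Suc_atMost ww_nth)
  finally have A: "(ww ^ Suc k) $ n = (\<Sum>c\<in>{1..n}. ww $ c * (ww ^ k) $ (n - c))" .
  have "real (card (PSk n (Suc k))) =
        (\<Sum>c\<in>{1..n}. real (card (OP n c)) * (real (Suc k) * real (card (PSk (n - c) k))))"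
    by (simp only: card_rec of_nat_sum of_nat_mult)
  also have "\<dots> = (\<Sum>c\<in>{1..n}. (-1) ^ (n + Suc k) * fact (Suc k) * (ww $ c * (ww ^ k) $ (n - c)))"
  proof (rule sum.cong[OF refl])
    fix c assume "c \<in> {1..n}"
    hence c: "1 \<le> c" "c \<le> n" by auto
    have "(-1) ^ (n + Suc k) * fact (Suc k) * (ww $ c * (ww ^ k) $ (n - c))
        = real (card (OP n c)) * real (Suc k) * (((-1::real) ^ (n + Suc k) * (-1) ^ (c - 1)) * fact k * (ww ^ k) $ (n - c))"
      unfolding ww_OP[OF c] by (simp add: algebra_simps)
    also have "\<dots> = real (card (OP n c)) * (real (Suc k) * real (card (PSk (n - c) k)))"
      unfolding sign_lemma[OF c] Suc.IH by simp
    finally show "real (card (OP n c)) * (real (Suc k) * real (card (PSk (n - c) k))) =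
        (-1) ^ (n + Suc k) * fact (Suc k) * (ww $ c * (ww ^ k) $ (n - c))" by simp
  qed
  also have "\<dots> = (-1) ^ (n + Suc k) * fact (Suc k) * (ww ^ Suc k) $ n"
    unfolding A by (simp add: sum_distrib_left)
  finally show ?case .
qed

lemma not_bad_iff: "a \<noteq> b \<Longrightarrow> (\<not> bad a b \<longleftrightarrow> \<bar>int a - int b\<bar> > 1)"
  by (auto simp: bad_def)

lemma CK_alt: "n \<noteq> 1 \<Longrightarrow> CK n = {\<sigma>. \<sigma> permutes {1..n} \<and>
      (\<forall>i\<in>{1..<n}. \<bar>int (\<sigma> i) - int (\<sigma> (Suc i))\<bar> > 1) \<and> \<bar>int (\<sigma> 1) - int (\<sigma> n)\<bar> > 1}"
  by (simp add: CK_def)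

lemma cond_equiv:
  assumes n: "n \<ge> 2" and s: "\<sigma> permutes {1..n}"
  shows "(\<forall>i<n. \<not> cB (map \<sigma> [1..<Suc n]) i) \<longleftrightarrow>
     (\<forall>i\<in>{1..<n}. \<bar>int (\<sigma> i) - int (\<sigma> (Suc i))\<bar> > 1) \<and> \<bar>int (\<sigma> 1) - int (\<sigma> n)\<bar> > 1"
proof -
  let ?xs = "map \<sigma> [1..<Suc n]"
  have inj: "\<sigma> x = \<sigma> y \<Longrightarrow> x = y" for x y using permutes_inj[OF s] by (auto dest: injD)
  have nth: "?xs ! i = \<sigma> (Suc i)" if "i < n" for i using that by (simp del: upt_Suc)
  have cB1: "cB ?xs i = bad (\<sigma> (Suc i)) (\<sigma> (Suc (Suc i)))" if "Suc i < n" for i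
    using that by (simp add: cB_def nth del: upt_Suc)
  have cB2: "cB ?xs (n - 1) = bad (\<sigma> n) (\<sigma> 1)"
  proof -
    have l: "length ?xs = n" by simp
    have m: "Suc (n - 1) mod n = 0" using n by simp
    have a1: "?xs ! (n - 1) = \<sigma> n" using nth[of "n - 1"] n by simp
    have a2: "?xs ! 0 = \<sigma> 1" using nth[of 0] n by simp
    show ?thesis unfolding cB_def l m a1 a2 ..
  qed
  have "(\<forall>i<n. \<not> cB ?xs i) \<longleftrightarrow> (\<forall>i. Suc i < n \<longrightarrow> \<not> cB ?xs i) \<and> \<not> cB ?xs (n - 1)"
  proof
    assume "\<forall>i<n. \<not> cB ?xs i" thus "(\<forall>i. Suc i < n \<longrightarrow> \<not> cB ?xs i) \<and> \<not> cB ?xs (n - 1)"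
      using n by auto
  next
    assume h: "(\<forall>i. Suc i < n \<longrightarrow> \<not> cB ?xs i) \<and> \<not> cB ?xs (n - 1)"
    show "\<forall>i<n. \<not> cB ?xs i"
    proof (intro allI impI)
      fix i assume "i < n"
      hence "Suc i < n \<or> i = n - 1" by auto
      thus "\<not> cB ?xs i" using h by auto
    qed
  qed
  also have "\<dots> \<longleftrightarrow> (\<forall>i\<in>{1..<n}. \<bar>int (\<sigma> i) - int (\<sigma> (Suc i))\<bar> > 1) \<and> \<bar>int (\<sigma> 1) - int (\<sigma> n)\<bar> > 1"
  proof -
    have "(\<forall>i. Suc i < n \<longrightarrow> \<not> cB ?xs i) \<longleftrightarrow> (\<forall>i\<in>{1..<n}. \<bar>int (\<sigma> i) - int (\<sigma> (Suc i))\<bar> > 1)"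
    proof
      assume h: "\<forall>i. Suc i < n \<longrightarrow> \<not> cB ?xs i"
      show "\<forall>i\<in>{1..<n}. \<bar>int (\<sigma> i) - int (\<sigma> (Suc i))\<bar> > 1"
      proof
        fix j assume "j \<in> {1..<n}"
        then obtain i where j: "j = Suc i" "Suc i < n" by (cases j) auto
        have "\<sigma> (Suc i) \<noteq> \<sigma> (Suc (Suc i))" using inj[of "Suc i" "Suc (Suc i)"] by auto
        thus "\<bar>int (\<sigma> j) - int (\<sigma> (Suc j))\<bar> > 1" using h j cB1[OF j(2)] not_bad_iff by auto
      qed
    next
      assume h: "\<forall>i\<in>{1..<n}. \<bar>int (\<sigma> i) - int (\<sigma> (Suc i))\<bar> > 1"
      show "\<forall>i. Suc i < n \<longrightarrow> \<not> cB ?xs i"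
      proof (intro allI impI)
        fix i assume i: "Suc i < n"
        have "\<sigma> (Suc i) \<noteq> \<sigma> (Suc (Suc i))" using inj[of "Suc i" "Suc (Suc i)"] by auto
        moreover have "Suc i \<in> {1..<n}" using i by auto
        ultimately show "\<not> cB ?xs i" using h cB1[OF i] not_bad_iff by auto
      qed
    qed
    moreover have "\<not> cB ?xs (n - 1) \<longleftrightarrow> \<bar>int (\<sigma> 1) - int (\<sigma> n)\<bar> > 1"
    proof -
      have "\<sigma> n \<noteq> \<sigma> 1" using inj n by (metis One_nat_def not_numeral_le_zero numeral_le_one_iff semiring_norm(69))
      thus ?thesis unfolding cB2 using not_bad_iff[of "\<sigma> n" "\<sigma> 1"] by (simp add: abs_minus_commute)
    qed
    ultimately show ?thesis by simp
  qed
  finally show ?thesis .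
qed

lemma CK_card_list:
  assumes n: "n \<ge> 2"
  shows "card (CK n) = card {xs\<in>PL n. \<forall>i<n. \<not> cB xs i}"
proof -
  let ?f = "\<lambda>\<sigma>. map \<sigma> [1..<Suc n]"
  let ?T = "{xs\<in>PL n. \<forall>i<n. \<not> cB xs i}"
  have CKe: "CK n = {\<sigma>. \<sigma> permutes {1..n} \<and> (\<forall>i<n. \<not> cB (?f \<sigma>) i)}"
  proof (intro set_eqI)
    fix \<sigma> show "\<sigma> \<in> CK n \<longleftrightarrow> \<sigma> \<in> {\<sigma>. \<sigma> permutes {1..n} \<and> (\<forall>i<n. \<not> cB (?f \<sigma>) i)}"
      using CK_alt[of n] cond_equiv[OF n, of \<sigma>] n by (auto simp del: upt_Suc)
  qed
  have inj: "inj_on ?f (CK n)"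
  proof (rule inj_onI)
    fix \<sigma> \<tau> assume s: "\<sigma> \<in> CK n" and t: "\<tau> \<in> CK n" and e: "?f \<sigma> = ?f \<tau>"
    have sp: "\<sigma> permutes {1..n}" and tp: "\<tau> permutes {1..n}" using s t CKe by auto
    show "\<sigma> = \<tau>"
    proof
      fix x show "\<sigma> x = \<tau> x"
      proof (cases "x \<in> {1..n}")
        case True
        hence "x \<in> set [1..<Suc n]" by auto
        thus ?thesis using e by (metis map_eq_conv)
      next
        case False
        thus ?thesis using sp tp by (simp add: permutes_not_in)
      qed
    qed
  qed
  have img: "?f ` CK n = ?T"
  proof (intro equalityI subsetI)
    fix xs assume "xs \<in> ?f ` CK n"
    then obtain \<sigma> where s: "\<sigma> \<in> CK n" and xs: "xs = ?f \<sigma>" by blast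
    have sp: "\<sigma> permutes {1..n}" and c: "\<forall>i<n. \<not> cB (?f \<sigma>) i" using s CKe by auto
    have "distinct xs" unfolding xs
      by (simp add: distinct_map permutes_inj_on[OF sp] del: upt_Suc)
    moreover have "set xs = {1..n}" unfolding xs using permutes_image[OF sp]
      by (simp add: atLeastLessThanSuc_atLeastAtMost del: upt_Suc)
    ultimately show "xs \<in> ?T" using c xs by (simp add: PL_def)
  next
    fix xs assume xs: "xs \<in> ?T"
    have len: "length xs = n" using xs PL_length by auto
    have d: "distinct xs" and st: "set xs = {1..n}" using xs by (auto simp: PL_def)
    define \<sigma> where "\<sigma> = (\<lambda>x. if x \<in> {1..n} then xs ! (x - 1) else x)"
    have injs: "inj_on \<sigma> {1..n}"
    proof (rule inj_onI)
      fix x y assume x: "x \<in> {1..n}" and y: "y \<in> {1..n}" and e: "\<sigma> x = \<sigma> y"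
      hence "xs ! (x - 1) = xs ! (y - 1)" by (simp add: \<sigma>_def)
      hence "x - 1 = y - 1" using nth_eq_iff_index_eq[OF d, of "x - 1" "y - 1"] len x y by auto
      thus "x = y" using x y by auto
    qed
    have ims: "\<sigma> ` {1..n} = {1..n}"
    proof (intro equalityI subsetI)
      fix y assume "y \<in> \<sigma> ` {1..n}"
      then obtain x where x: "x \<in> {1..n}" "y = xs ! (x - 1)" by (auto simp: \<sigma>_def)
      hence "y \<in> set xs" using len by auto
      thus "y \<in> {1..n}" using st by simp
    next
      fix y assume "y \<in> {1..n}"
      hence "y \<in> set xs" using st by simp
      then obtain i where i: "i < n" "y = xs ! i" using len by (metis in_set_conv_nth)
      hence "\<sigma> (Suc i) = y" by (simp add: \<sigma>_def)
      moreover have "Suc i \<in> {1..n}" using i by auto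
      ultimately show "y \<in> \<sigma> ` {1..n}" by blast
    qed
    have bj: "bij_betw \<sigma> {1..n} {1..n}" using injs ims by (simp add: bij_betw_def)
    have sp: "\<sigma> permutes {1..n}"
      by (rule bij_imp_permutes[OF bj]) (auto simp: \<sigma>_def)
    have fx: "?f \<sigma> = xs"
      by (rule nth_equalityI) (auto simp: len \<sigma>_def nth_append simp del: upt_Suc)
    have "\<forall>i<n. \<not> cB (?f \<sigma>) i" unfolding fx using xs by simp
    hence "\<sigma> \<in> CK n" unfolding CKe using sp by simp
    thus "xs \<in> ?f ` CK n" using fx by blast
  qed
  show ?thesis using card_image[OF inj] img by simp
qed


lemma sq_sign: "(-1::real) ^ j * (-1) ^ j = 1"
  by (simp flip: power_mult_distrib)

lemma card_CK_main:
  assumes n: "n \<ge> 3"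
  shows "real (card (CK n)) = (\<Sum>m<n. fact m * real n * (ww ^ Suc m) $ n)"
proof -
  define H where "H k = (\<Sum>ps\<in>PSk n k. length (hd ps))" for k
  have "int (card (CK n)) = (\<Sum>ps\<in>PS n. (-1) ^ (n + length ps) * int (length (hd ps)))"
    using CK_card_list[of n] card_cyc[OF n] n by simp
  also have "\<dots> = (\<Sum>k\<in>{..n}. \<Sum>ps\<in>{ps\<in>PS n. length ps = k}. (-1) ^ (n + length ps) * int (length (hd ps)))"
  proof (rule sum.group[symmetric])
    show "finite (PS n)" by (rule finite_PS)
    show "finite {..n}" by simp
    show "length ` PS n \<subseteq> {..n}"
    proof
      fix l assume "l \<in> length ` PS n"
      then obtain ps where ps: "ps \<in> PS n" "l = length ps" by blast
      have "length ps \<le> length (concat ps)"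
        using ps(1) by (intro length_le_concat) (auto simp: PS_def validp_def)
      also have "length (concat ps) = n" using ps(1) PL_length by (auto simp: PS_def)
      finally show "l \<in> {..n}" using ps by simp
    qed
  qed
  also have "\<dots> = (\<Sum>k\<in>{..n}. (-1) ^ (n + k) * int (H k))"
  proof (rule sum.cong[OF refl])
    fix k
    have "(\<Sum>ps\<in>{ps\<in>PS n. length ps = k}. (-1) ^ (n + length ps) * int (length (hd ps)))
        = (\<Sum>ps\<in>PSk n k. (-1) ^ (n + k) * int (length (hd ps)))"
      unfolding PSk_def by (rule sum.cong) auto
    also have "\<dots> = (-1) ^ (n + k) * int (H k)"
      by (simp add: H_def sum_distrib_left)
    finally show "(\<Sum>ps\<in>{ps\<in>PS n. length ps = k}. (-1) ^ (n + length ps) * int (length (hd ps)))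
        = (-1) ^ (n + k) * int (H k)" .
  qed
  finally have A: "int (card (CK n)) = (\<Sum>k\<in>{..n}. (-1) ^ (n + k) * int (H k))" .
  hence "real (card (CK n)) = (\<Sum>k\<in>{..n}. (-1) ^ (n + k) * real (H k))"
    using arg_cong[OF A, of real_of_int] by simp
  also have "\<dots> = (\<Sum>k<Suc n. (-1) ^ (n + k) * real (H k))"
    by (simp add: lessThan_Suc_atMost)
  also have "\<dots> = (-1) ^ n * real (H 0) + (\<Sum>m<n. (-1) ^ (n + Suc m) * real (H (Suc m)))"
    by (subst sum.lessThan_Suc_shift) simp
  also have "\<dots> = (\<Sum>m<n. fact m * real n * (ww ^ Suc m) $ n)"
  proof -
    have "PSk n 0 = {}" using card_PSk0[of n] finite_PSk[of n 0] n by auto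
    hence H0: "H 0 = 0" by (simp add: H_def)
    have "(-1) ^ (n + Suc m) * real (H (Suc m)) = fact m * real n * (ww ^ Suc m) $ n" for m
    proof -
      have sc: "real (Suc m) * real (H (Suc m)) = real n * real (card (PSk n (Suc m)))"
        using sym_count[of "Suc m" n] unfolding H_def by (metis of_nat_mult)
      have "real (Suc m) * ((-1) ^ (n + Suc m) * real (H (Suc m)))
          = (-1) ^ (n + Suc m) * (real n * real (card (PSk n (Suc m))))"
        by (subst sc[symmetric]) (simp only: mult_ac)
      also have "\<dots> = ((-1) ^ (n + Suc m) * (-1) ^ (n + Suc m)) * real (Suc m) * (fact m * real n * (ww ^ Suc m) $ n)"
        unfolding N_formula by (simp add: algebra_simps)
      also have "\<dots> = real (Suc m) * (fact m * real n * (ww ^ Suc m) $ n)"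
        by (simp only: sq_sign mult_1_left)
      finally have F: "real (Suc m) * ((-1) ^ (n + Suc m) * real (H (Suc m))) =
          real (Suc m) * (fact m * real n * (ww ^ Suc m) $ n)" .
      have nz: "real (Suc m) \<noteq> 0" by simp
      show ?thesis using F nz by (metis mult_cancel_left)
    qed
    thus ?thesis using H0 by simp
  qed
  finally show ?thesis .
qed

lemma card_CK1: "card (CK 1) = 1"
proof -
  have "CK 1 = {\<sigma>. \<sigma> permutes {1..1}}" by (simp add: CK_def)
  thus ?thesis using card_permutations[of "{1..1::nat}" 1] by simp
qed

lemma card_CK2: "card (CK 2) = 0"
proof -
  have "CK 2 = {}"
  proof (rule ccontr)
    assume "CK 2 \<noteq> {}"
    then obtain \<sigma> where s: "\<sigma> \<in> CK 2" by blast
    hence sp: "\<sigma> permutes {1..2}" and c: "\<bar>int (\<sigma> 1) - int (\<sigma> 2)\<bar> > 1"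
      by (auto simp: CK_def)
    have "\<sigma> 1 \<in> {1..2}" "\<sigma> 2 \<in> {1..2}" using permutes_in_image[OF sp] by auto
    moreover have "\<sigma> 1 \<noteq> \<sigma> 2" using permutes_inj[OF sp] by (metis injD numeral_One numeral_eq_iff semiring_norm(85))
    ultimately show False using c by auto
  qed
  thus ?thesis by simp
qed



lemma coeff_id:
  "(\<Sum>m<n. fact m * real n * (ww ^ Suc m) $ n) = (CK_gf - 2 * fps_X ^ 2) $ n"
proof -
  have two: "(2 * fps_X ^ 2 :: real fps) $ n = (if n = 2 then 2 else 0)"
    by (simp add: numeral_fps_const)
  have ck: "CK_gf $ n = (if n = 0 then 0 else real (card (CK n)))"
    by (simp add: CK_gf_def)
  consider "n = 0" | "n = 1" | "n = 2" | "n \<ge> 3" by linarith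
  thus ?thesis
  proof cases
    case 1 thus ?thesis using two ck by simp
  next
    case 2 thus ?thesis using two ck card_CK1 by (simp add: ww_nth)
  next
    case 3
    have e: "{0..2::nat} = {0, 1, 2}" by auto
    have "(ww ^ 2) $ 2 = 1" by (simp add: power2_eq_square fps_mult_nth ww_nth e)
    thus ?thesis using two ck card_CK2 3 by (simp add: ww_nth numeral_2_eq_2)
  next
    case 4 thus ?thesis using two ck card_CK_main[OF 4] by simp
  qed
qed

theorem theorem4p2:
  shows "CK_gf = 2 * fps_X ^ 2 +
    (\<Sum>m. fps_const (fact (Suc m)) * fps_X ^ m * ((1 - fps_X) / (1 + fps_X)) ^ m *
           (fps_X * (1 - 2 * fps_X - fps_X ^ 2) / (1 + fps_X) ^ 2))"
proof -
  let ?T = "\<lambda>m. fps_const (fact m) * fps_X * fps_deriv (ww ^ Suc m)"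
  have "?T sums (CK_gf - 2 * fps_X ^ 2)"
    unfolding sums_def
  proof (rule tendsto_fpsI)
    fix n
    show "\<forall>\<^sub>F N in sequentially. (\<Sum>m<N. ?T m) $ n = (CK_gf - 2 * fps_X ^ 2) $ n"
    proof (rule eventually_sequentiallyI[of n])
      fix N assume N: "n \<le> N"
      have "(\<Sum>m<N. ?T m) $ n = (\<Sum>m<N. fact m * real n * (ww ^ Suc m) $ n)"
        by (simp only: fps_sum_nth T_nth)
      also have "\<dots> = (\<Sum>m<n. fact m * real n * (ww ^ Suc m) $ n)"
        by (rule sum.mono_neutral_right) (use N in \<open>auto intro!: ww_pow_nth_small simp del: power_Suc\<close>)
      also have "\<dots> = (CK_gf - 2 * fps_X ^ 2) $ n" by (rule coeff_id)
      finally show "(\<Sum>m<N. ?T m) $ n = (CK_gf - 2 * fps_X ^ 2) $ n" .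
    qed
  qed
  hence "suminf ?T = CK_gf - 2 * fps_X ^ 2" by (rule sums_unique[symmetric])
  thus ?thesis by (simp only: T_eq) simp
qed


end
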